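(* Consider a wormhole with two 1D boundaries, with three atomic regions $A,B,C$ on the left boundary and $A',B',C'$ on the right boundary. Let an input vector $v\in\mathbb{R}_{\ge 0}^{63}$ specify a value $S(R)$ for every nonempty subset $R\subseteq\{A,B,C,A',B',C'\}$. Let $V\subseteq\mathbb{R}_{\ge0}^{63}$ be the set of input vectors for which there exists a planar graph model. Then $V$ is not closed under convex combinations.
   Context: The boundary consists of two circles, the left one divided into the arcs $A,B,C$ in this cyclic order and the right one into $A',B',C'$. A graph model for $v$ is a finite undirected graph with nonnegative real edge weights containing six distinguished boundary vertices $v_A,\ldots,v_{C'}$ such that for every nonempty $R$, the min-cut value between the boundary vertices of the regions in $R$ and the remaining boundary vertices equals $S(R)$ (the min-cut value between two disjoint vertex sets is the minimum total weight of an edge set whose removal disconnects every vertex of the first from every vertex of the second). It is planar if it can be drawn without edge crossings on a closed annulus with $v_A,v_B,v_C$ on one boundary circle in this cyclic order and $v_{A'},v_{B'},v_{C'}$ on the other in this cyclic order. *)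

theory Defs
  imports "HOL-Analysis.Analysis"
begin

datatype region = RA | RB | RC | RA' | RB' | RC'

text \<open>We represent it as a function on region sets, with the (irrelevant)
  value at the empty set normalised to 0.\<close>
definition input_vector :: "(region set \<Rightarrow> real) \<Rightarrow> bool" where
  "input_vector S \<longleftrightarrow> S {} = 0 \<and> (\<forall>R. R \<noteq> {} \<longrightarrow> 0 \<le> S R)"

definition wgraph :: "nat set \<Rightarrow> nat set set \<Rightarrow> (nat set \<Rightarrow> real) \<Rightarrow> bool" where
  "wgraph Vs E w \<longleftrightarrow> finite Vs \<and> (\<forall>e\<in>E. card e = 2 \<and> e \<subseteq> Vs) \<and> (\<forall>e\<in>E. 0 \<le> w e)"

definition adj :: "nat set set \<Rightarrow> (nat \<times> nat) set" where
  "adj E = {(x, y). {x, y} \<in> E}"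

definition separates :: "nat set set \<Rightarrow> nat set set \<Rightarrow> nat set \<Rightarrow> nat set \<Rightarrow> bool" where
  "separates E F X Y \<longleftrightarrow> (\<forall>x\<in>X. \<forall>y\<in>Y. (x, y) \<notin> (adj (E - F))\<^sup>*)"

definition mincut :: "nat set set \<Rightarrow> (nat set \<Rightarrow> real) \<Rightarrow> nat set \<Rightarrow> nat set \<Rightarrow> real" where
  "mincut E w X Y = Min {sum w F | F. F \<subseteq> E \<and> separates E F X Y}"

definition graph_model ::
  "nat set \<Rightarrow> nat set set \<Rightarrow> (nat set \<Rightarrow> real) \<Rightarrow> (region \<Rightarrow> nat) \<Rightarrow> (region set \<Rightarrow> real) \<Rightarrow> bool" where
  "graph_model Vs E w b S \<longleftrightarrow>
     wgraph Vs E w \<and> inj b \<and> range b \<subseteq> Vs \<and>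
     (\<forall>R. R \<noteq> {} \<longrightarrow> mincut E w (b ` R) (b ` (UNIV - R)) = S R)"

definition annulus :: "complex set" where
  "annulus = {z. 1 \<le> norm z \<and> norm z \<le> 2}"

definition ccw :: "complex \<Rightarrow> complex \<Rightarrow> complex \<Rightarrow> bool" where
  "ccw p q s \<longleftrightarrow> Im (cnj (q - p) * (s - p)) > 0"

definition annulus_drawing ::
  "nat set \<Rightarrow> nat set set \<Rightarrow> (region \<Rightarrow> nat) \<Rightarrow> (nat \<Rightarrow> complex) \<Rightarrow> (nat set \<Rightarrow> real \<Rightarrow> complex) \<Rightarrow> bool" where
  "annulus_drawing Vs E b pos \<gamma> \<longleftrightarrow>
     inj_on pos Vs \<and> pos ` Vs \<subseteq> annulus \<and>
     (\<forall>e\<in>E. arc (\<gamma> e) \<and> path_image (\<gamma> e) \<subseteq> annulus \<and>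
        (\<exists>u v. e = {u, v} \<and> pathstart (\<gamma> e) = pos u \<and> pathfinish (\<gamma> e) = pos v) \<and>
        path_image (\<gamma> e) \<inter> pos ` Vs \<subseteq> pos ` e) \<and>
     (\<forall>e\<in>E. \<forall>f\<in>E. e \<noteq> f \<longrightarrow> path_image (\<gamma> e) \<inter> path_image (\<gamma> f) \<subseteq> pos ` (e \<inter> f)) \<and>
     (\<forall>r\<in>{RA, RB, RC}. norm (pos (b r)) = 1) \<and>
     (\<forall>r\<in>{RA', RB', RC'}. norm (pos (b r)) = 2) \<and>
     ccw (pos (b RA)) (pos (b RB)) (pos (b RC)) \<and>
     ccw (pos (b RA')) (pos (b RB')) (pos (b RC'))"

definition planar_graph_model :: "(region set \<Rightarrow> real) \<Rightarrow> bool" where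
  "planar_graph_model S \<longleftrightarrow>
     (\<exists>Vs E w b pos \<gamma>. graph_model Vs E w b S \<and> annulus_drawing Vs E b pos \<gamma>)"

definition V_planar :: "(region set \<Rightarrow> real) set" where
  "V_planar = {S. input_vector S \<and> planar_graph_model S}"

end

theory Submission
  imports Defs
begin

definition c2v :: "complex \<Rightarrow> real^2" where
  "c2v z = (\<chi> i. if i = 1 then Re z else Im z)"

lemma c2v_1[simp]: "c2v z $ 1 = Re z" and c2v_2[simp]: "c2v z $ 2 = Im z"
  by (auto simp: c2v_def)

lemma continuous_c2v: "continuous_on S c2v"
  unfolding c2v_def
  apply (intro continuous_on_vec_lambda)
  subgoal for i by (cases "i = 1") (auto intro!: continuous_intros)
  done

lemma c2v_inj: "c2v z = c2v w \<Longrightarrow> z = w"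
  by (metis c2v_1 c2v_2 complex_eqI)

lemma fashoda_complex:
  assumes "path f" "path g"
    and "\<And>z. z \<in> path_image f \<Longrightarrow> a1 \<le> Re z \<and> Re z \<le> b1 \<and> a2 \<le> Im z \<and> Im z \<le> b2"
    and "\<And>z. z \<in> path_image g \<Longrightarrow> a1 \<le> Re z \<and> Re z \<le> b1 \<and> a2 \<le> Im z \<and> Im z \<le> b2"
    and "Re (pathstart f) = a1" "Re (pathfinish f) = b1"
    and "Im (pathstart g) = a2" "Im (pathfinish g) = b2"
  shows "path_image f \<inter> path_image g \<noteq> {}"
proof -
  define a :: "real^2" where "a = (\<chi> i. if i = 1 then a1 else a2)"
  define b :: "real^2" where "b = (\<chi> i. if i = 1 then b1 else b2)"
  have box: "c2v z \<in> cbox a b" if "a1 \<le> Re z \<and> Re z \<le> b1 \<and> a2 \<le> Im z \<and> Im z \<le> b2" for z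
    using that unfolding mem_box_cart a_def b_def c2v_def by (auto simp: forall_2)
  have pf: "path (c2v \<circ> f)" "path (c2v \<circ> g)"
    using assms(1,2) continuous_c2v by (auto intro: path_continuous_image)
  have "path_image (c2v \<circ> f) \<subseteq> cbox a b" "path_image (c2v \<circ> g) \<subseteq> cbox a b"
    using assms(3,4) box by (auto simp: path_image_compose)
  moreover have "(pathstart (c2v \<circ> f))$1 = a$1" "(pathfinish (c2v \<circ> f))$1 = b$1"
     "(pathstart (c2v \<circ> g))$2 = a$2" "(pathfinish (c2v \<circ> g))$2 = b$2"
    using assms(5-8) by (auto simp: pathstart_def pathfinish_def a_def b_def)
  ultimately obtain z where "z \<in> path_image (c2v \<circ> f)" "z \<in> path_image (c2v \<circ> g)"
    using fashoda[OF pf] by blast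
  then show ?thesis
    by (auto simp: path_image_compose dest: c2v_inj)
qed

lemma seg_bounds:
  assumes "z \<in> closed_segment a b"
  shows "min (Re a) (Re b) \<le> Re z \<and> Re z \<le> max (Re a) (Re b) \<and>
         min (Im a) (Im b) \<le> Im z \<and> Im z \<le> max (Im a) (Im b)"
proof -
  obtain u where u: "0 \<le> u" "u \<le> 1" "z = (1 - u) *\<^sub>R a + u *\<^sub>R b"
    using assms unfolding closed_segment_def by auto
  have h: "min x y \<le> (1 - u) * x + u * y \<and> (1 - u) * x + u * y \<le> max x y" for x y :: real
  proof -
    have "(1 - u) * x + u * y - min x y = (1 - u) * (x - min x y) + u * (y - min x y)"
      by (simp add: algebra_simps)
    moreover have "max x y - ((1 - u) * x + u * y) = (1 - u) * (max x y - x) + u * (max x y - y)"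
      by (simp add: algebra_simps)
    ultimately show ?thesis using u by (smt (verit) mult_nonneg_nonneg)
  qed
  show ?thesis using h[of "Re a" "Re b"] h[of "Im a" "Im b"] u(3) by simp
qed

lemma strip_order:
  fixes P Q :: "real \<Rightarrow> complex" and l :: real
  assumes pP: "path P" and pQ: "path Q" and l: "l > 0"
    and sP: "\<And>z. z \<in> path_image P \<Longrightarrow> 0 \<le> Re z \<and> Re z \<le> l"
    and sQ: "\<And>z. z \<in> path_image Q \<Longrightarrow> 0 \<le> Re z \<and> Re z \<le> l"
    and eP: "Re (pathstart P) = 0" "Re (pathfinish P) = l"
    and eQ: "Re (pathstart Q) = 0" "Re (pathfinish Q) = l"
    and disj: "path_image P \<inter> path_image Q = {}"
    and lt: "Im (pathstart P) < Im (pathstart Q)"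
  shows "Im (pathfinish P) < Im (pathfinish Q)"
proof (rule ccontr)
  assume "\<not> ?thesis"
  define p0 where "p0 = Im (pathstart P)"
  define q0 where "q0 = Im (pathstart Q)"
  define p1 where "p1 = Im (pathfinish P)"
  define q1 where "q1 = Im (pathfinish Q)"
  have inP: "pathstart P \<in> path_image P" "pathfinish P \<in> path_image P"
    and inQ: "pathstart Q \<in> path_image Q" "pathfinish Q \<in> path_image Q" by auto
  have "pathfinish P \<noteq> pathfinish Q"
  proof
    assume "pathfinish P = pathfinish Q"
    then have "pathfinish P \<in> path_image P \<inter> path_image Q" using inP(2) inQ(2) by simp
    then show False using disj by simp
  qed
  then have "p1 \<noteq> q1" using eP eQ unfolding p1_def q1_def by (auto simp: complex_eq_iff)
  with \<open>\<not> ?thesis\<close> have gt: "q1 < p1" unfolding p1_def q1_def by auto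
  have lt0: "p0 < q0" using lt unfolding p0_def q0_def .
  have "bounded (path_image P \<union> path_image Q)"
    using pP pQ by (simp add: bounded_path_image)
  then obtain B where B: "\<And>z. z \<in> path_image P \<union> path_image Q \<Longrightarrow> norm z \<le> B"
    unfolding bounded_iff by blast
  have BI: "\<bar>Im z\<bar> \<le> B" if "z \<in> path_image P \<union> path_image Q" for z
    using B[OF that] abs_Im_le_cmod[of z] by linarith
  define M where "M = B + 1"
  have bP: "\<And>z. z \<in> path_image P \<Longrightarrow> -M \<le> Im z \<and> Im z \<le> M"
   and bQ: "\<And>z. z \<in> path_image Q \<Longrightarrow> -M \<le> Im z \<and> Im z \<le> M"
    using BI unfolding M_def by fastforce+
  have bnds: "-M < p0" "p0 < M" "-M < q0" "q0 < M" "-M < p1" "p1 < M" "-M < q1" "q1 < M"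
    using BI[of "pathstart P"] BI[of "pathstart Q"] BI[of "pathfinish P"] BI[of "pathfinish Q"]
      inP inQ unfolding M_def p0_def q0_def p1_def q1_def by auto
  define f where "f = linepath (Complex (-1) q0) (pathstart Q) +++ Q +++
                      linepath (pathfinish Q) (Complex (l+1) q1)"
  define g where "g = linepath (Complex (-1/2) (-M)) (Complex (-1/2) p0) +++
                      linepath (Complex (-1/2) p0) (pathstart P) +++ P +++
                      linepath (pathfinish P) (Complex (l+1/2) p1) +++
                      linepath (Complex (l+1/2) p1) (Complex (l+1/2) M)"
  have PS: "pathstart P = Complex 0 p0" "pathfinish P = Complex l p1"
    using eP unfolding p0_def p1_def by (auto intro: complex_eqI)
  have QS: "pathstart Q = Complex 0 q0" "pathfinish Q = Complex l q1"
    using eQ unfolding q0_def q1_def by (auto intro: complex_eqI)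
  have pf: "path f" unfolding f_def using pP pQ by (auto simp: PS QS)
  have pg: "path g" unfolding g_def using pP pQ by (auto simp: PS QS)
  have imf: "path_image f = closed_segment (Complex (-1) q0) (Complex 0 q0) \<union> path_image Q
       \<union> closed_segment (Complex l q1) (Complex (l+1) q1)"
    unfolding f_def by (simp add: path_image_join QS Un_assoc)
  have img: "path_image g = closed_segment (Complex (-1/2) (-M)) (Complex (-1/2) p0)
     \<union> closed_segment (Complex (-1/2) p0) (Complex 0 p0) \<union> path_image P
     \<union> closed_segment (Complex l p1) (Complex (l+1/2) p1)
     \<union> closed_segment (Complex (l+1/2) p1) (Complex (l+1/2) M)"
    unfolding g_def by (simp add: path_image_join PS Un_assoc)
  have segh: "z \<in> closed_segment (Complex xa y) (Complex xb y) \<Longrightarrow> xa \<le> xb \<Longrightarrow>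
      Im z = y \<and> xa \<le> Re z \<and> Re z \<le> xb" for z xa xb y
    by (drule seg_bounds) auto
  have segv: "z \<in> closed_segment (Complex x ya) (Complex x yb) \<Longrightarrow> ya \<le> yb \<Longrightarrow>
      Re z = x \<and> ya \<le> Im z \<and> Im z \<le> yb" for z ya yb x
    by (drule seg_bounds) auto
  have boxf: "-1 \<le> Re z \<and> Re z \<le> l+1 \<and> -M \<le> Im z \<and> Im z \<le> M" if "z \<in> path_image f" for z
  proof -
    have "z \<in> path_image Q \<or> (Im z = q0 \<and> -1 \<le> Re z \<and> Re z \<le> 0)
      \<or> (Im z = q1 \<and> l \<le> Re z \<and> Re z \<le> l+1)"
      using that unfolding imf using segh[where z=z and xa="-1" and xb="0" and y="q0"] segh[where z=z and xa="l" and xb="l+1" and y="q1"] l by auto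
    then show ?thesis using sQ[of z] bQ[of z] bnds l by auto
  qed
  have boxg: "-1 \<le> Re z \<and> Re z \<le> l+1 \<and> -M \<le> Im z \<and> Im z \<le> M" if "z \<in> path_image g" for z
  proof -
    have "z \<in> path_image P \<or> (Re z = -1/2 \<and> -M \<le> Im z \<and> Im z \<le> p0)
      \<or> (Im z = p0 \<and> -1/2 \<le> Re z \<and> Re z \<le> 0)
      \<or> (Im z = p1 \<and> l \<le> Re z \<and> Re z \<le> l+1/2)
      \<or> (Re z = l+1/2 \<and> p1 \<le> Im z \<and> Im z \<le> M)"
      using that unfolding img using segv[where z=z and ya="-M" and yb="p0" and x="-1/2"] segh[where z=z and xa="-1/2" and xb="0" and y="p0"]
        segh[where z=z and xa="l" and xb="l+1/2" and y="p1"] segv[where z=z and ya="p1" and yb="M" and x="l+1/2"] l bnds by auto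
    then show ?thesis using sP[of z] bP[of z] bnds l by auto
  qed
  have "path_image f \<inter> path_image g \<noteq> {}"
    apply (rule fashoda_complex[OF pf pg boxf boxg])
    by (auto simp: f_def g_def)
  then obtain z where zf: "z \<in> path_image f" and zg: "z \<in> path_image g" by blast
  have c1: False if "z \<in> path_image Q" "Re z = 0" "Im z = p0"
  proof -
    have "z = pathstart P" using that PS QS by (simp add: complex_eq_iff)
    then have "z \<in> path_image P \<inter> path_image Q" using that(1) inP by simp
    then show False using disj by simp
  qed
  have c2: False if "z \<in> path_image Q" "Re z = l" "Im z = p1"
  proof -
    have "z = pathfinish P" using that PS QS by (simp add: complex_eq_iff)
    then have "z \<in> path_image P \<inter> path_image Q" using that(1) inP by simp
    then show False using disj by simp
  qed
  have c3: False if "z \<in> path_image P" "Re z = 0" "Im z = q0"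
  proof -
    have "z = pathstart Q" using that PS QS by (simp add: complex_eq_iff)
    then have "z \<in> path_image P \<inter> path_image Q" using that(1) inQ by simp
    then show False using disj by simp
  qed
  have c4: False if "z \<in> path_image P" "Re z = l" "Im z = q1"
  proof -
    have "z = pathfinish Q" using that PS QS by (simp add: complex_eq_iff)
    then have "z \<in> path_image P \<inter> path_image Q" using that(1) inQ by simp
    then show False using disj by simp
  qed
  have c5: "z \<in> path_image P \<Longrightarrow> z \<in> path_image Q \<Longrightarrow> False"
    using disj by (metis IntI empty_iff)
  have F: "z \<in> path_image Q \<or> (Im z = q0 \<and> -1 \<le> Re z \<and> Re z \<le> 0)
      \<or> (Im z = q1 \<and> l \<le> Re z \<and> Re z \<le> l+1)"
    using zf unfolding imf using segh[where z=z and xa="-1" and xb="0" and y="q0"] segh[where z=z and xa="l" and xb="l+1" and y="q1"] l by auto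
  have G: "z \<in> path_image P \<or> (Re z = -1/2 \<and> Im z \<le> p0)
      \<or> (Im z = p0 \<and> -1/2 \<le> Re z \<and> Re z \<le> 0)
      \<or> (Im z = p1 \<and> l \<le> Re z \<and> Re z \<le> l+1/2)
      \<or> (Re z = l+1/2 \<and> p1 \<le> Im z)"
    using zg unfolding img using segv[where z=z and ya="-M" and yb="p0" and x="-1/2"] segh[where z=z and xa="-1/2" and xb="0" and y="p0"]
        segh[where z=z and xa="l" and xb="l+1/2" and y="p1"] segv[where z=z and ya="p1" and yb="M" and x="l+1/2"] l bnds by auto
  have rP: "z \<in> path_image P \<Longrightarrow> 0 \<le> Re z \<and> Re z \<le> l" using sP[of z] by simp
  have rQ: "z \<in> path_image Q \<Longrightarrow> 0 \<le> Re z \<and> Re z \<le> l" using sQ[of z] by simp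
  from F G show False
    apply (elim disjE conjE)
    using rP rQ c1 c2 c3 c4 c5 lt0 gt l by auto
qed

lemma trig_id: fixes xx yy :: real shows "sin (2 * yy - 2 * xx) + sin (2 * xx) - sin (2 * yy) = 4 * sin xx * sin (yy - xx) * sin yy"
proof -
  have A: "sin xx ^ 2 + cos xx ^ 2 = 1" "sin yy ^ 2 + cos yy ^ 2 = 1" by (simp_all add: sin_cos_squared_add)
  show ?thesis
    apply (simp add: sin_diff cos_diff sin_double cos_double)
    using A by algebra
qed

lemma ccw_Im: "Im (cnj (q - p) * (s - p)) = Re (q - p) * Im (s - p) - Im (q - p) * Re (s - p)"
  by (simp add: algebra_simps)

lemma ccw_circle:
  fixes r a b c :: real
  assumes r: "r > 0" and x: "0 < b - a" "b - a < 2*pi" and y: "0 < c - a" "c - a < 2*pi"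
    and ccw: "ccw (of_real r * cis a) (of_real r * cis b) (of_real r * cis c)"
  shows "b < c"
proof (rule ccontr)
  assume "\<not> b < c"
  have e: "Im (cnj (of_real r * cis b - of_real r * cis a) * (of_real r * cis c - of_real r * cis a))
      = r^2 * (sin (c - b) + sin (b - a) - sin (c - a))"
    unfolding ccw_Im by (simp add: sin_diff algebra_simps power2_eq_square)
  define uu where "uu = (b - a) / 2"
  define vv where "vv = (c - a) / 2"
  have "sin (c - b) + sin (b - a) - sin (c - a) = sin (2 * vv - 2 * uu) + sin (2 * uu) - sin (2 * vv)"
  proof -
    have h1: "c - b = 2 * vv - 2 * uu" "b - a = 2 * uu" "c - a = 2 * vv" unfolding uu_def vv_def by (simp_all add: field_simps)
    show ?thesis by (simp only: h1)
  qed
  also have "\<dots> = 4 * sin uu * sin (vv - uu) * sin vv" by (rule trig_id)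
  finally have e2: "sin (c - b) + sin (b - a) - sin (c - a) = 4 * sin uu * sin (vv - uu) * sin vv" .
  have su: "sin uu > 0" using x unfolding uu_def by (intro sin_gt_zero) auto
  have sv: "sin vv > 0" using y unfolding vv_def by (intro sin_gt_zero) auto
  have cb: "c \<le> b" using \<open>\<not> b < c\<close> by simp
  have "uu - vv = (b - c) / 2" unfolding uu_def vv_def by (simp add: field_simps)
  moreover have "0 \<le> (b - c) / 2" "(b - c) / 2 \<le> pi" using cb x y by simp_all
  ultimately have "sin (uu - vv) \<ge> 0" by (simp add: sin_ge_zero)
  then have "sin (vv - uu) \<le> 0" by (metis minus_diff_eq neg_0_le_iff_le sin_minus)
  then have "4 * sin uu * sin (vv - uu) * sin vv \<le> 0"
  proof -
    have "0 \<le> 4 * sin uu * sin vv" using su sv by simp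
    moreover have "4 * sin uu * sin (vv - uu) * sin vv = (4 * sin uu * sin vv) * sin (vv - uu)"
      by (simp add: algebra_simps)
    ultimately show ?thesis using \<open>sin (vv - uu) \<le> 0\<close> mult_nonneg_nonpos[of "4 * sin uu * sin vv" "sin (vv - uu)"] by linarith
  qed
  then have "Im (cnj (of_real r * cis b - of_real r * cis a) * (of_real r * cis c - of_real r * cis a)) \<le> 0"
    using e e2 r by (simp add: mult_nonneg_nonpos)
  then show False using ccw unfolding ccw_def by simp
qed

definition lift :: "(real \<Rightarrow> complex) \<Rightarrow> (real \<Rightarrow> complex) \<Rightarrow> bool" where
  "lift g L \<longleftrightarrow> path L \<and> (\<forall>t\<in>{0..1}. g t = exp (L t))"

lemma annulus_ne0: "z \<in> annulus \<Longrightarrow> z \<noteq> 0"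
  by (auto simp: annulus_def)

lemma lift_exists:
  assumes "path g" "path_image g \<subseteq> annulus"
  obtains L where "lift g L"
proof -
  have "continuous_on {0..1} g" using assms(1) by (simp add: path_def)
  moreover have "contractible {0..1::real}" by (simp add: convex_imp_contractible)
  moreover have "\<And>t. t \<in> {0..1} \<Longrightarrow> g t \<noteq> 0"
    using assms(2) annulus_ne0 unfolding path_image_def by blast
  ultimately obtain L where "continuous_on {0..1} L" "\<And>t. t \<in> {0..1} \<Longrightarrow> g t = exp (L t)"
    using continuous_logarithm_on_contractible by metis
  then show ?thesis using that unfolding lift_def path_def by blast
qed

lemma lift_shift:
  assumes "lift g L"
  shows "lift g (\<lambda>t. L t + \<i> * (of_int k * (of_real pi * 2)))"
  using assms unfolding lift_def path_def
  by (auto intro!: continuous_intros)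

lemma lift_Re:
  assumes "lift g L" "path_image g \<subseteq> annulus" "t \<in> {0..1}"
  shows "Re (L t) = ln (norm (g t))" "0 \<le> Re (L t)" "Re (L t) \<le> ln 2"
proof -
  have g: "g t = exp (L t)" using assms unfolding lift_def by auto
  show 1: "Re (L t) = ln (norm (g t))" using g by simp
  have "g t \<in> annulus" using assms(2,3) unfolding path_image_def by auto
  then have n: "1 \<le> norm (g t)" "norm (g t) \<le> 2" by (auto simp: annulus_def)
  show "0 \<le> Re (L t)" using n 1 by simp
  have "ln (norm (g t)) \<le> ln 2" using n by (subst ln_le_cancel_iff) auto
  then show "Re (L t) \<le> ln 2" using 1 by simp
qed

lemma lift_disjoint:
  assumes "lift g L" "lift h M" "path_image g \<inter> path_image h = {}"
  shows "path_image L \<inter> path_image M = {}"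
proof (rule ccontr)
  assume "path_image L \<inter> path_image M \<noteq> {}"
  then obtain z where z: "z \<in> path_image L" "z \<in> path_image M" by blast
  then obtain s t where st: "s \<in> {0..1}" "t \<in> {0..1}" "L s = M t"
    unfolding path_image_def by (metis imageE)
  then have "g s = h t" using assms(1,2) unfolding lift_def by auto
  moreover have "g s \<in> path_image g" "h t \<in> path_image h" using st unfolding path_image_def by auto
  ultimately show False using assms(3) by (metis IntI empty_iff)
qed

lemma lift_order:
  assumes L: "lift g L" and M: "lift h M"
    and ag: "path_image g \<subseteq> annulus" and ah: "path_image h \<subseteq> annulus"
    and d: "path_image g \<inter> path_image h = {}"
    and n: "norm (pathstart g) = 1" "norm (pathstart h) = 1" "norm (pathfinish g) = 2" "norm (pathfinish h) = 2"
    and lt: "Im (L 0) < Im (M 0)"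
  shows "Im (L 1) < Im (M 1)"
proof -
  have pL: "path L" and pM: "path M" using L M unfolding lift_def by auto
  have sL: "0 \<le> Re z \<and> Re z \<le> ln 2" if "z \<in> path_image L" for z
    using that lift_Re[OF L ag] unfolding path_image_def by auto
  have sM: "0 \<le> Re z \<and> Re z \<le> ln 2" if "z \<in> path_image M" for z
    using that lift_Re[OF M ah] unfolding path_image_def by auto
  have e: "Re (pathstart L) = 0" "Re (pathfinish L) = ln 2" "Re (pathstart M) = 0" "Re (pathfinish M) = ln 2"
    using lift_Re(1)[OF L ag, of 0] lift_Re(1)[OF L ag, of 1] lift_Re(1)[OF M ah, of 0] lift_Re(1)[OF M ah, of 1] n
    by (auto simp: pathstart_def pathfinish_def)
  have "Im (pathfinish L) < Im (pathfinish M)"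
    by (rule strip_order[OF pL pM _ sL sM e(1,2) e(3,4) lift_disjoint[OF L M d]])
       (use lt in \<open>auto simp: pathstart_def\<close>)
  then show ?thesis by (simp add: pathfinish_def)
qed

lemma lift_point:
  assumes "lift g L" "path_image g \<subseteq> annulus" "t \<in> {0..1}"
  shows "g t = of_real (norm (g t)) * cis (Im (L t))"
proof -
  have "g t = exp (L t)" using assms unfolding lift_def by auto
  moreover have "exp (Re (L t)) = norm (g t)" using lift_Re(1)[OF assms]
    by (metis calculation norm_exp_eq_Re)
  ultimately show ?thesis by (metis exp_eq_polar exp_of_real)
qed

lemma lift_normalize:
  assumes "lift h M"
  obtains M' where "lift h M'" "\<alpha> < Im (M' 0)" "Im (M' 0) \<le> \<alpha> + 2 * pi"
proof -
  define k where "k = \<lfloor>(\<alpha> - Im (M 0)) / (2 * pi)\<rfloor> + 1"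
  define M' where "M' = (\<lambda>t. M t + \<i> * (of_int k * (of_real pi * 2)))"
  have l: "lift h M'" unfolding M'_def by (rule lift_shift[OF assms])
  have im: "Im (M' 0) = Im (M 0) + of_int k * (2 * pi)" unfolding M'_def by simp
  have f1: "(\<alpha> - Im (M 0)) / (2 * pi) < of_int k" unfolding k_def by linarith
  have f2: "of_int k - 1 \<le> (\<alpha> - Im (M 0)) / (2 * pi)" unfolding k_def by linarith
  have pp: "2 * pi > 0" by simp
  have "\<alpha> - Im (M 0) < of_int k * (2 * pi)" using f1 pp by (simp add: divide_less_eq)
  moreover have "(of_int k - 1) * (2 * pi) \<le> \<alpha> - Im (M 0)" using f2 pp by (simp add: le_divide_eq)
  ultimately show ?thesis using that[OF l] im by (simp add: algebra_simps)
qed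

lemma no_reversal:
  assumes p1: "path g1" and p2: "path g2" and p3: "path g3"
    and a1: "path_image g1 \<subseteq> annulus" and a2: "path_image g2 \<subseteq> annulus" and a3: "path_image g3 \<subseteq> annulus"
    and d12: "path_image g1 \<inter> path_image g2 = {}" and d13: "path_image g1 \<inter> path_image g3 = {}"
    and d23: "path_image g2 \<inter> path_image g3 = {}"
    and n1: "norm (pathstart g1) = 1" "norm (pathfinish g1) = 2"
    and n2: "norm (pathstart g2) = 1" "norm (pathfinish g2) = 2"
    and n3: "norm (pathstart g3) = 1" "norm (pathfinish g3) = 2"
    and ccwi: "ccw (pathstart g1) (pathstart g2) (pathstart g3)"
    and ccwo: "ccw (pathfinish g1) (pathfinish g3) (pathfinish g2)"
  shows False
proof -
  obtain L1 where L1: "lift g1 L1" using lift_exists[OF p1 a1] by blast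
  define \<alpha> where "\<alpha> = Im (L1 0)"
  obtain L2' where "lift g2 L2'" using lift_exists[OF p2 a2] by blast
  then obtain L2 where L2: "lift g2 L2" "\<alpha> < Im (L2 0)" "Im (L2 0) \<le> \<alpha> + 2 * pi"
    using lift_normalize by blast
  obtain L3' where "lift g3 L3'" using lift_exists[OF p3 a3] by blast
  then obtain L3 where L3: "lift g3 L3" "\<alpha> < Im (L3 0)" "Im (L3 0) \<le> \<alpha> + 2 * pi"
    using lift_normalize by blast
  define \<beta> where "\<beta> = Im (L2 0)"
  define \<gamma> where "\<gamma> = Im (L3 0)"
  have z1: "(0::real) \<in> {0..1}" and o1: "(1::real) \<in> {0..1}" by auto
  have s1: "pathstart g1 = of_real 1 * cis \<alpha>"
    using lift_point[OF L1 a1 z1] n1 unfolding \<alpha>_def pathstart_def by simp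
  have s2: "pathstart g2 = of_real 1 * cis \<beta>"
    using lift_point[OF L2(1) a2 z1] n2 unfolding \<beta>_def pathstart_def by simp
  have s3: "pathstart g3 = of_real 1 * cis \<gamma>"
    using lift_point[OF L3(1) a3 z1] n3 unfolding \<gamma>_def pathstart_def by simp
  have f1: "pathfinish g1 = of_real 2 * cis (Im (L1 1))"
    using lift_point[OF L1 a1 o1] n1 unfolding pathfinish_def by simp
  have f2: "pathfinish g2 = of_real 2 * cis (Im (L2 1))"
    using lift_point[OF L2(1) a2 o1] n2 unfolding pathfinish_def by simp
  have f3: "pathfinish g3 = of_real 2 * cis (Im (L3 1))"
    using lift_point[OF L3(1) a3 o1] n3 unfolding pathfinish_def by simp
  have cisp: "cis (x + 2 * pi) = cis x" for x by (simp add: complex_eq_iff)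
  have "\<beta> \<noteq> \<alpha> + 2 * pi"
  proof
    assume "\<beta> = \<alpha> + 2 * pi"
    then have "pathstart g2 = pathstart g1" using s1 s2 cisp by simp
    moreover have "pathstart g1 \<in> path_image g1" "pathstart g2 \<in> path_image g2" by auto
    ultimately show False using d12 by (metis IntI empty_iff)
  qed
  then have b: "\<alpha> < \<beta>" "\<beta> < \<alpha> + 2 * pi" using L2 unfolding \<beta>_def by auto
  have "\<gamma> \<noteq> \<alpha> + 2 * pi"
  proof
    assume "\<gamma> = \<alpha> + 2 * pi"
    then have "pathstart g3 = pathstart g1" using s1 s3 cisp by simp
    moreover have "pathstart g1 \<in> path_image g1" "pathstart g3 \<in> path_image g3" by auto
    ultimately show False using d13 by (metis IntI empty_iff)
  qed
  then have c: "\<alpha> < \<gamma>" "\<gamma> < \<alpha> + 2 * pi" using L3 unfolding \<gamma>_def by auto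
  have "ccw (of_real 1 * cis \<alpha>) (of_real 1 * cis \<beta>) (of_real 1 * cis \<gamma>)"
    using ccwi unfolding s1 s2 s3 .
  then have bc: "\<beta> < \<gamma>"
    using ccw_circle[where r=1 and a=\<alpha> and b=\<beta> and c=\<gamma>] b c by linarith
  have d21: "path_image g2 \<inter> path_image g1 = {}" and d31: "path_image g3 \<inter> path_image g1 = {}"
    using d12 d13 by auto
  have o12: "Im (L1 1) < Im (L2 1)"
    by (rule lift_order[OF L1 L2(1) a1 a2 d12 n1(1) n2(1) n1(2) n2(2)]) (use b \<alpha>_def \<beta>_def in simp)
  have o13: "Im (L1 1) < Im (L3 1)"
    by (rule lift_order[OF L1 L3(1) a1 a3 d13 n1(1) n3(1) n1(2) n3(2)]) (use c \<alpha>_def \<gamma>_def in simp)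
  have o23: "Im (L2 1) < Im (L3 1)"
    by (rule lift_order[OF L2(1) L3(1) a2 a3 d23 n2(1) n3(1) n2(2) n3(2)]) (use bc \<beta>_def \<gamma>_def in simp)
  have o21: "Im (L2 1) + of_int (-1) * (2 * pi) < Im (L1 1)"
    using lift_order[OF lift_shift[OF L2(1), of "-1"] L1 a2 a1 d21 n2(1) n1(1) n2(2) n1(2)] b
    unfolding \<alpha>_def \<beta>_def by simp
  have o31: "Im (L3 1) + of_int (-1) * (2 * pi) < Im (L1 1)"
    using lift_order[OF lift_shift[OF L3(1), of "-1"] L1 a3 a1 d31 n3(1) n1(1) n3(2) n1(2)] c
    unfolding \<alpha>_def \<gamma>_def by simp
  have "ccw (of_real 2 * cis (Im (L1 1))) (of_real 2 * cis (Im (L3 1))) (of_real 2 * cis (Im (L2 1)))"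
    using ccwo unfolding f1 f2 f3 .
  then have "Im (L3 1) < Im (L2 1)"
    using ccw_circle[where r=2 and a="Im (L1 1)" and b="Im (L3 1)" and c="Im (L2 1)"] o12 o13 o21 o31 by simp
  then show False using o23 by simp
qed

lemma wgraph_finite: "wgraph Vs E w \<Longrightarrow> finite E"
  unfolding wgraph_def by (meson Pow_iff finite_Pow_iff finite_subset subsetI)

lemma separates_E: "X \<inter> Y = {} \<Longrightarrow> separates E E X Y"
  unfolding separates_def adj_def by auto

lemma separates_mono: "separates E F X Y \<Longrightarrow> F \<subseteq> F' \<Longrightarrow> separates E F' X Y"
proof -
  assume s: "separates E F X Y" and f: "F \<subseteq> F'"
  have "adj (E - F') \<subseteq> adj (E - F)" using f unfolding adj_def by auto
  then have "(adj (E - F'))\<^sup>* \<subseteq> (adj (E - F))\<^sup>*" by (rule rtrancl_mono)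
  then show ?thesis using s unfolding separates_def by blast
qed

lemma mincut_facts:
  assumes g: "wgraph Vs E w" and d: "X \<inter> Y = {}"
  shows "0 \<le> mincut E w X Y"
    and "mincut E w X Y = 0 \<longleftrightarrow> separates E {e\<in>E. w e = 0} X Y"
proof -
  define S where "S = {sum w F | F. F \<subseteq> E \<and> separates E F X Y}"
  have fE: "finite E" using g by (rule wgraph_finite)
  have wn: "\<forall>e\<in>E. 0 \<le> w e" using g unfolding wgraph_def by auto
  have fin: "finite S"
  proof -
    have "S \<subseteq> sum w ` Pow E" unfolding S_def by auto
    then show ?thesis using fE by (meson finite_Pow_iff finite_imageI finite_subset)
  qed
  have ne: "S \<noteq> {}" unfolding S_def using separates_E[OF d, of E] by auto
  have nn: "\<forall>s\<in>S. 0 \<le> s" unfolding S_def using wn by (auto intro!: sum_nonneg)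
  have mc: "mincut E w X Y = Min S" unfolding mincut_def S_def by simp
  show "0 \<le> mincut E w X Y" unfolding mc using fin ne nn by simp
  show "mincut E w X Y = 0 \<longleftrightarrow> separates E {e\<in>E. w e = 0} X Y"
  proof
    assume "mincut E w X Y = 0"
    then have "0 \<in> S" using Min_in[OF fin ne] mc by simp
    then obtain F where F: "F \<subseteq> E" "separates E F X Y" "sum w F = 0" unfolding S_def by auto
    have "finite F" using F(1) fE by (rule finite_subset)
    moreover have "\<forall>e\<in>F. 0 \<le> w e" using F(1) wn by blast
    ultimately have "\<forall>e\<in>F. w e = 0" using F(3) sum_nonneg_eq_0_iff by blast
    then have "F \<subseteq> {e\<in>E. w e = 0}" using F(1) by auto
    then show "separates E {e\<in>E. w e = 0} X Y" by (rule separates_mono[OF F(2)])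
  next
    assume s: "separates E {e\<in>E. w e = 0} X Y"
    have "sum w {e\<in>E. w e = 0} = 0" by simp
    then have "0 \<in> S" unfolding S_def mem_Collect_eq
      by (intro exI[of _ "{e\<in>E. w e = 0}"]) (use s in auto)
    then have "Min S \<le> 0" using fin by simp
    moreover have "0 \<le> Min S" using fin ne nn by simp
    ultimately show "mincut E w X Y = 0" using mc by linarith
  qed
qed

lemma sep_closed:
  assumes "X \<subseteq> K" "K \<inter> Y = {}" "\<And>x y. x \<in> K \<Longrightarrow> (x, y) \<in> adj (E - F) \<Longrightarrow> y \<in> K"
  shows "separates E F X Y"
  unfolding separates_def
proof (intro ballI notI)
  fix x y assume xy: "x \<in> X" "y \<in> Y" "(x, y) \<in> (adj (E - F))\<^sup>*"
  have "y \<in> K" using xy(3)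
  proof (induction rule: rtrancl_induct)
    case base then show ?case using xy(1) assms(1) by auto
  next
    case (step y z) then show ?case using assms(3) by blast
  qed
  then show False using xy(2) assms(2) by auto
qed

lemma not_sep:
  assumes "{x, y} \<in> E - F" "x \<in> X" "y \<in> Y"
  shows "\<not> separates E F X Y"
  using assms unfolding separates_def adj_def by auto

lemma gm_disj: "graph_model Vs E w b S \<Longrightarrow> b ` R \<inter> b ` (UNIV - R) = {}"
  unfolding graph_model_def by (auto dest: injD)

lemma gm_zero:
  assumes gm: "graph_model Vs E w b S" and R: "R \<noteq> {}" and v: "S R = 0"
  shows "separates E {e\<in>E. w e = 0} (b ` R) (b ` (UNIV - R))"
proof -
  have g: "wgraph Vs E w" and m: "mincut E w (b ` R) (b ` (UNIV - R)) = S R"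
    using gm R unfolding graph_model_def by auto
  have e: "(mincut E w (b ` R) (b ` (UNIV - R)) = 0) = separates E {e\<in>E. w e = 0} (b ` R) (b ` (UNIV - R))"
    by (rule mincut_facts(2)[OF g gm_disj[OF gm]])
  show ?thesis using e m v by auto
qed

lemma gm_pos:
  assumes gm: "graph_model Vs E w b S" and R: "R \<noteq> {}" and v: "S R > 0"
  shows "\<not> separates E {e\<in>E. w e = 0} (b ` R) (b ` (UNIV - R))"
proof -
  have g: "wgraph Vs E w" and m: "mincut E w (b ` R) (b ` (UNIV - R)) = S R"
    using gm R unfolding graph_model_def by auto
  have e: "(mincut E w (b ` R) (b ` (UNIV - R)) = 0) = separates E {e\<in>E. w e = 0} (b ` R) (b ` (UNIV - R))"
    by (rule mincut_facts(2)[OF g gm_disj[OF gm]])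
  show ?thesis using e m v by auto
qed

definition compimg :: "nat set set \<Rightarrow> (nat \<Rightarrow> complex) \<Rightarrow> (nat set \<Rightarrow> real \<Rightarrow> complex) \<Rightarrow> nat \<Rightarrow> complex set" where
  "compimg E' pos \<gamma> x = insert (pos x) (\<Union>{path_image (\<gamma> e) | e. e \<in> E' \<and> e \<subseteq> {z. (x, z) \<in> (adj E')\<^sup>*}})"

lemma reach_path:
  assumes dr: "annulus_drawing Vs E b pos \<gamma>" and E': "E' \<subseteq> E" and x: "x \<in> Vs"
    and r: "(x, y) \<in> (adj E')\<^sup>*"
  shows "\<exists>p. path p \<and> pathstart p = pos x \<and> pathfinish p = pos y \<and> path_image p \<subseteq> annulus \<and>
           path_image p \<subseteq> compimg E' pos \<gamma> x"
  using r
proof (induction rule: rtrancl_induct)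
  case base
  have "pos x \<in> annulus" using dr x unfolding annulus_drawing_def by auto
  then show ?case unfolding compimg_def
    by (intro exI[of _ "linepath (pos x) (pos x)"]) (auto simp: pathstart_def pathfinish_def path_def path_image_def)
next
  case (step y z)
  then obtain p where p: "path p" "pathstart p = pos x" "pathfinish p = pos y" "path_image p \<subseteq> annulus"
    "path_image p \<subseteq> compimg E' pos \<gamma> x" by blast
  define e where "e = {y, z}"
  have eE': "e \<in> E'" using step(2) unfolding adj_def e_def by auto
  then have eE: "e \<in> E" using E' by auto
  have ar: "arc (\<gamma> e)" and ai: "path_image (\<gamma> e) \<subseteq> annulus"
    and "\<exists>u v. e = {u, v} \<and> pathstart (\<gamma> e) = pos u \<and> pathfinish (\<gamma> e) = pos v"
    using dr eE unfolding annulus_drawing_def by auto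
  then obtain u v where uv: "e = {u, v}" "pathstart (\<gamma> e) = pos u" "pathfinish (\<gamma> e) = pos v" by blast
  define q where "q = (if u = y then \<gamma> e else reversepath (\<gamma> e))"
  have uv2: "(u = y \<and> v = z) \<or> (u = z \<and> v = y)" using uv(1) unfolding e_def by (auto simp: doubleton_eq_iff)
  have q: "path q" "pathstart q = pos y" "pathfinish q = pos z" "path_image q = path_image (\<gamma> e)"
    using uv uv2 ar arc_imp_path unfolding q_def by auto
  have zC: "(x, z) \<in> (adj E')\<^sup>*" using step(1,2) by simp
  have "e \<subseteq> {w. (x, w) \<in> (adj E')\<^sup>*}" unfolding e_def using step(1) zC by auto
  then have "path_image (\<gamma> e) \<subseteq> compimg E' pos \<gamma> x" unfolding compimg_def using eE' by blast
  then show ?case using p q ai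
    by (intro exI[of _ "p +++ q"]) (auto simp: path_image_join)
qed

lemma sym_adj: "sym (adj E)"
  unfolding sym_def adj_def by (auto simp: insert_commute)

lemma compimg_disjoint:
  assumes dr: "annulus_drawing Vs E b pos \<gamma>" and g: "wgraph Vs E w" and E': "E' \<subseteq> E"
    and x1: "x1 \<in> Vs" and x2: "x2 \<in> Vs" and nr: "(x1, x2) \<notin> (adj E')\<^sup>*"
  shows "compimg E' pos \<gamma> x1 \<inter> compimg E' pos \<gamma> x2 = {}"
proof -
  define C1 where "C1 = {z. (x1, z) \<in> (adj E')\<^sup>*}"
  define C2 where "C2 = {z. (x2, z) \<in> (adj E')\<^sup>*}"
  have symR: "sym ((adj E')\<^sup>*)" using sym_adj by (rule sym_rtrancl)
  have C12: "C1 \<inter> C2 = {}"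
  proof (rule ccontr)
    assume "C1 \<inter> C2 \<noteq> {}"
    then obtain z where "(x1, z) \<in> (adj E')\<^sup>*" "(x2, z) \<in> (adj E')\<^sup>*" unfolding C1_def C2_def by auto
    moreover then have "(z, x2) \<in> (adj E')\<^sup>*" using symR by (meson symD)
    ultimately show False using nr by (meson rtrancl_trans)
  qed
  have x1C: "x1 \<in> C1" and x2C: "x2 \<in> C2" unfolding C1_def C2_def by auto
  have inj: "inj_on pos Vs" and posA: "\<forall>e\<in>E. path_image (\<gamma> e) \<inter> pos ` Vs \<subseteq> pos ` e"
    and cross: "\<forall>e\<in>E. \<forall>f\<in>E. e \<noteq> f \<longrightarrow> path_image (\<gamma> e) \<inter> path_image (\<gamma> f) \<subseteq> pos ` (e \<inter> f)"
    using dr unfolding annulus_drawing_def by auto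
  have eV: "\<And>e. e \<in> E \<Longrightarrow> e \<subseteq> Vs" and ec: "\<And>e. e \<in> E \<Longrightarrow> card e = 2"
    using g unfolding wgraph_def by auto
  have vert: "xi \<in> C" if "xi \<in> Vs" "pos xi \<in> path_image (\<gamma> f)" "f \<in> E" "f \<subseteq> C" for xi f C
  proof -
    have "pos xi \<in> pos ` f" using posA that(1-3) by blast
    then obtain z where z: "z \<in> f" "pos xi = pos z" by auto
    then have "xi = z" using inj that(1) eV[OF that(3)] by (meson inj_onD subsetD)
    then show ?thesis using z that(4) by auto
  qed
  show ?thesis
  proof (rule ccontr)
    assume "compimg E' pos \<gamma> x1 \<inter> compimg E' pos \<gamma> x2 \<noteq> {}"
    then obtain p where p1: "p \<in> compimg E' pos \<gamma> x1" and p2: "p \<in> compimg E' pos \<gamma> x2" by blast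
    have cases1: "p = pos x1 \<or> (\<exists>e. e \<in> E' \<and> e \<subseteq> C1 \<and> p \<in> path_image (\<gamma> e))"
      using p1 unfolding compimg_def C1_def by blast
    have cases2: "p = pos x2 \<or> (\<exists>e. e \<in> E' \<and> e \<subseteq> C2 \<and> p \<in> path_image (\<gamma> e))"
      using p2 unfolding compimg_def C2_def by blast
    show False
    proof (cases "p = pos x1")
      case True
      show False
      proof (cases "p = pos x2")
        case True
        then have "x1 = x2" using \<open>p = pos x1\<close> inj x1 x2 by (metis inj_onD)
        then show False using nr by simp
      next
        case False
        then obtain f where f: "f \<in> E'" "f \<subseteq> C2" "p \<in> path_image (\<gamma> f)" using cases2 by blast
        have "x1 \<in> C2" using vert[OF x1 _ _ f(2)] f E' \<open>p = pos x1\<close> by blast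
        then show False using x1C C12 by blast
      qed
    next
      case False
      then obtain e where e: "e \<in> E'" "e \<subseteq> C1" "p \<in> path_image (\<gamma> e)" using cases1 by blast
      show False
      proof (cases "p = pos x2")
        case True
        have "x2 \<in> C1" using vert[OF x2 _ _ e(2)] e E' True by blast
        then show False using x2C C12 by blast
      next
        case False
        then obtain f where f: "f \<in> E'" "f \<subseteq> C2" "p \<in> path_image (\<gamma> f)" using cases2 by blast
        show False
        proof (cases "e = f")
          case True
          then have "e \<subseteq> C1 \<inter> C2" using e f by auto
          moreover have "e \<noteq> {}" using ec[of e] e E' by auto
          ultimately show False using C12 by auto
        next
          case False
          then have "p \<in> pos ` (e \<inter> f)" using cross e f E' by blast
          then have "e \<inter> f \<noteq> {}" by auto
          then show False using e f C12 by blast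
        qed
      qed
    qed
  qed
qed

lemma UNIV_region: "(UNIV :: region set) = {RA, RB, RC, RA', RB', RC'}"
  apply (rule set_eqI)
  subgoal for x by (cases x) auto
  done

definition bex :: "region \<Rightarrow> nat" where
  "bex r = (case r of RA \<Rightarrow> 0 | RB \<Rightarrow> 1 | RC \<Rightarrow> 2 | RA' \<Rightarrow> 3 | RB' \<Rightarrow> 4 | RC' \<Rightarrow> 5)"

lemma bex_simps[simp]: "bex RA = 0" "bex RB = 1" "bex RC = 2" "bex RA' = 3" "bex RB' = 4" "bex RC' = 5"
  by (simp_all add: bex_def)

lemma inj_bex: "inj bex"
  unfolding inj_def bex_def by (auto split: region.splits)

definition Vs0 :: "nat set" where "Vs0 = {0, 1, 2, 3, 4, 5}"

lemma range_bex: "range bex \<subseteq> Vs0"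
  unfolding Vs0_def bex_def by (auto split: region.splits)

definition Ev :: "nat set set" where "Ev = {{0, 3}, {1, 5}}"
definition Eu :: "nat set set" where "Eu = {{2, 4}}"
definition w1 :: "nat set \<Rightarrow> real" where "w1 e = 1"

definition vv :: "region set \<Rightarrow> real" where
  "vv R = mincut Ev w1 (bex ` R) (bex ` (UNIV - R))"
definition uu :: "region set \<Rightarrow> real" where
  "uu R = mincut Eu w1 (bex ` R) (bex ` (UNIV - R))"

lemma wgraph_v: "wgraph Vs0 Ev w1"
  unfolding wgraph_def Vs0_def Ev_def w1_def by auto
lemma wgraph_u: "wgraph Vs0 Eu w1"
  unfolding wgraph_def Vs0_def Eu_def w1_def by auto

lemma bex_disj: "bex ` R \<inter> bex ` (UNIV - R) = {}"
  using inj_bex by (auto dest: injD)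

lemma input_from_graph:
  assumes g: "wgraph Vs E w1"
  shows "input_vector (\<lambda>R. mincut E w1 (bex ` R) (bex ` (UNIV - R)))"
  unfolding input_vector_def
proof
  have "separates E {e\<in>E. w1 e = 0} (bex ` {}) (bex ` (UNIV - {}))"
    unfolding separates_def by simp
  then show "mincut E w1 (bex ` {}) (bex ` (UNIV - {})) = 0"
    using mincut_facts(2)[OF g bex_disj] by blast
  show "\<forall>R. R \<noteq> {} \<longrightarrow> 0 \<le> mincut E w1 (bex ` R) (bex ` (UNIV - R))"
    using mincut_facts(1)[OF g bex_disj] by blast
qed

lemma gm_from_graph:
  assumes g: "wgraph Vs0 E w1"
  shows "graph_model Vs0 E w1 bex (\<lambda>R. mincut E w1 (bex ` R) (bex ` (UNIV - R)))"
  unfolding graph_model_def using g inj_bex range_bex by auto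

lemma radial_seg:
  assumes "norm c = 1"
  shows "closed_segment c (2 * c) \<subseteq> annulus"
proof
  fix z assume "z \<in> closed_segment c (2 * c)"
  then obtain u :: real where u: "0 \<le> u" "u \<le> 1" "z = (1 - u) *\<^sub>R c + u *\<^sub>R (2 * c)"
    unfolding closed_segment_def by auto
  have "z = of_real (1 + u) * c" using u(3) by (simp add: scaleR_conv_of_real algebra_simps)
  then have "norm z = \<bar>1 + u\<bar> * norm c" by (simp only: norm_mult norm_of_real)
  then have "norm z = 1 + u" using assms u(1) by simp
  then show "z \<in> annulus" using u unfolding annulus_def by simp
qed

lemma sqrt4: "sqrt 4 = 2"
  using real_sqrt_abs[of 2] by simp

definition posv :: "nat \<Rightarrow> complex" where
  "posv n = (if n = 0 then 1 else if n = 1 then \<i> else if n = 2 then -1 else if n = 3 then 2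
            else if n = 4 then Complex (6/5) (8/5) else 2 * \<i>)"

definition gam :: "(nat \<Rightarrow> complex) \<Rightarrow> nat set \<Rightarrow> real \<Rightarrow> complex" where
  "gam pos e = linepath (pos (Min e)) (pos (Max e))"

lemma norm_65: "norm (Complex (6/5) (8/5)) = 2"
  by (simp add: complex_norm power2_eq_square sqrt4)

lemma drawing_v: "annulus_drawing Vs0 Ev bex posv (gam posv)"
proof -
  have inj: "inj_on posv Vs0"
    unfolding inj_on_def Vs0_def posv_def by (auto simp: complex_eq_iff)
  have ann: "posv ` Vs0 \<subseteq> annulus"
    unfolding Vs0_def posv_def annulus_def by (auto simp: norm_65 norm_mult)
  have s1: "closed_segment 1 2 \<subseteq> annulus" using radial_seg[of 1] by simp
  have s2: "closed_segment \<i> (2 * \<i>) \<subseteq> annulus" using radial_seg[of \<i>] by simp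
  have av1: "closed_segment 1 2 \<inter> posv ` Vs0 \<subseteq> posv ` {0, 3}"
    unfolding Vs0_def by (auto dest!: seg_bounds simp: posv_def)
  have av2: "closed_segment \<i> (2 * \<i>) \<inter> posv ` Vs0 \<subseteq> posv ` {1, 5}"
    unfolding Vs0_def by (auto dest!: seg_bounds simp: posv_def)
  have cr: "closed_segment 1 2 \<inter> closed_segment \<i> (2 * \<i>) = {}"
    by (auto dest!: seg_bounds)
  have g1: "gam posv {0, 3} = linepath 1 2" by (simp add: gam_def posv_def)
  have g2: "gam posv {1, 5} = linepath \<i> (2 * \<i>)" by (simp add: gam_def posv_def)
  have e1: "arc (gam posv {0,3}) \<and> path_image (gam posv {0,3}) \<subseteq> annulus \<and>
        (\<exists>u v. {0,3} = {u, v} \<and> pathstart (gam posv {0,3}) = posv u \<and> pathfinish (gam posv {0,3}) = posv v) \<and>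
        path_image (gam posv {0,3}) \<inter> posv ` Vs0 \<subseteq> posv ` {0,3}"
  proof -
    have "\<exists>u v. {0::nat,3} = {u, v} \<and> pathstart (linepath 1 2) = posv u \<and> pathfinish (linepath 1 2) = posv v"
      by (rule exI[of _ 0], rule exI[of _ 3]) (simp add: posv_def)
    moreover have "arc (linepath (1::complex) 2)" by (simp add: arc_linepath)
    ultimately show ?thesis unfolding g1 using s1 av1 by simp
  qed
  have e2: "arc (gam posv {1,5}) \<and> path_image (gam posv {1,5}) \<subseteq> annulus \<and>
        (\<exists>u v. {1,5} = {u, v} \<and> pathstart (gam posv {1,5}) = posv u \<and> pathfinish (gam posv {1,5}) = posv v) \<and>
        path_image (gam posv {1,5}) \<inter> posv ` Vs0 \<subseteq> posv ` {1,5}"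
  proof -
    have "\<exists>u v. {1::nat,5} = {u, v} \<and> pathstart (linepath \<i> (2 * \<i>)) = posv u \<and> pathfinish (linepath \<i> (2 * \<i>)) = posv v"
      by (rule exI[of _ 1], rule exI[of _ 5]) (simp add: posv_def)
    moreover have "arc (linepath \<i> (2 * \<i>))" by (simp add: arc_linepath complex_eq_iff)
    ultimately show ?thesis unfolding g2 using s2 av2 by simp
  qed
  have edges: "\<forall>e\<in>Ev. arc (gam posv e) \<and> path_image (gam posv e) \<subseteq> annulus \<and>
        (\<exists>u v. e = {u, v} \<and> pathstart (gam posv e) = posv u \<and> pathfinish (gam posv e) = posv v) \<and>
        path_image (gam posv e) \<inter> posv ` Vs0 \<subseteq> posv ` e"
  proof (intro ballI)
    fix e assume "e \<in> Ev"
    then have "e = {0,3} \<or> e = {1,5}" unfolding Ev_def by simp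
    then show "arc (gam posv e) \<and> path_image (gam posv e) \<subseteq> annulus \<and>
        (\<exists>u v. e = {u, v} \<and> pathstart (gam posv e) = posv u \<and> pathfinish (gam posv e) = posv v) \<and>
        path_image (gam posv e) \<inter> posv ` Vs0 \<subseteq> posv ` e"
      using e1 e2 by (elim disjE) (simp_all only:)
  qed
  have cross: "\<forall>e\<in>Ev. \<forall>f\<in>Ev. e \<noteq> f \<longrightarrow> path_image (gam posv e) \<inter> path_image (gam posv f) \<subseteq> posv ` (e \<inter> f)"
    unfolding Ev_def using cr g1 g2 by auto
  have ccw1: "ccw (posv (bex RA)) (posv (bex RB)) (posv (bex RC))"
    by (simp add: ccw_def posv_def)
  have ccw2: "ccw (posv (bex RA')) (posv (bex RB')) (posv (bex RC'))"
    by (simp add: ccw_def posv_def)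
  have n1: "\<forall>r\<in>{RA, RB, RC}. norm (posv (bex r)) = 1" by (simp add: posv_def)
  have n2: "\<forall>r\<in>{RA', RB', RC'}. norm (posv (bex r)) = 2" by (simp add: posv_def norm_65 norm_mult)
  show ?thesis unfolding annulus_drawing_def
    using inj ann edges cross ccw1 ccw2 n1 n2 by (intro conjI)
qed

definition posu :: "nat \<Rightarrow> complex" where
  "posu n = (if n = 0 then 1 else if n = 1 then \<i> else if n = 2 then -1 else if n = 3 then 2
            else if n = 4 then -2 else - 2 * \<i>)"

lemma drawing_u: "annulus_drawing Vs0 Eu bex posu (gam posu)"
proof -
  have inj: "inj_on posu Vs0"
    unfolding inj_on_def Vs0_def posu_def by (auto simp: complex_eq_iff)
  have ann: "posu ` Vs0 \<subseteq> annulus"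
    unfolding Vs0_def posu_def annulus_def by (auto simp: norm_mult)
  have s1: "closed_segment (-1) (-2) \<subseteq> annulus" using radial_seg[of "-1"] by simp
  have av1: "closed_segment (-1) (-2) \<inter> posu ` Vs0 \<subseteq> posu ` {2, 4}"
    unfolding Vs0_def by (auto dest!: seg_bounds simp: posu_def)
  have g1: "gam posu {2, 4} = linepath (-1) (-2)" by (simp add: gam_def posu_def)
  have e1: "arc (gam posu {2,4}) \<and> path_image (gam posu {2,4}) \<subseteq> annulus \<and>
        (\<exists>u v. {2,4} = {u, v} \<and> pathstart (gam posu {2,4}) = posu u \<and> pathfinish (gam posu {2,4}) = posu v) \<and>
        path_image (gam posu {2,4}) \<inter> posu ` Vs0 \<subseteq> posu ` {2,4}"
  proof -
    have "\<exists>u v. {2::nat,4} = {u, v} \<and> pathstart (linepath (-1) (-2)) = posu u \<and> pathfinish (linepath (-1) (-2)) = posu v"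
      by (rule exI[of _ 2], rule exI[of _ 4]) (simp add: posu_def)
    moreover have "arc (linepath (-1::complex) (-2))" by (simp add: arc_linepath)
    ultimately show ?thesis unfolding g1 using s1 av1 by simp
  qed
  have edges: "\<forall>e\<in>Eu. arc (gam posu e) \<and> path_image (gam posu e) \<subseteq> annulus \<and>
        (\<exists>u v. e = {u, v} \<and> pathstart (gam posu e) = posu u \<and> pathfinish (gam posu e) = posu v) \<and>
        path_image (gam posu e) \<inter> posu ` Vs0 \<subseteq> posu ` e"
  proof (intro ballI)
    fix e assume "e \<in> Eu"
    then have "e = {2,4}" unfolding Eu_def by simp
    then show "arc (gam posu e) \<and> path_image (gam posu e) \<subseteq> annulus \<and>
        (\<exists>u v. e = {u, v} \<and> pathstart (gam posu e) = posu u \<and> pathfinish (gam posu e) = posu v) \<and>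
        path_image (gam posu e) \<inter> posu ` Vs0 \<subseteq> posu ` e"
      using e1 by (simp only:)
  qed
  have cross: "\<forall>e\<in>Eu. \<forall>f\<in>Eu. e \<noteq> f \<longrightarrow> path_image (gam posu e) \<inter> path_image (gam posu f) \<subseteq> posu ` (e \<inter> f)"
    unfolding Eu_def by simp
  have ccw1: "ccw (posu (bex RA)) (posu (bex RB)) (posu (bex RC))"
    by (simp add: ccw_def posu_def)
  have ccw2: "ccw (posu (bex RA')) (posu (bex RB')) (posu (bex RC'))"
    by (simp add: ccw_def posu_def)
  have n1: "\<forall>r\<in>{RA, RB, RC}. norm (posu (bex r)) = 1" by (simp add: posu_def)
  have n2: "\<forall>r\<in>{RA', RB', RC'}. norm (posu (bex r)) = 2" by (simp add: posu_def norm_mult)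
  show ?thesis unfolding annulus_drawing_def
    using inj ann edges cross ccw1 ccw2 n1 n2 by (intro conjI)
qed

lemma zero_by_K:
  assumes g: "wgraph Vs E w1" and K: "bex ` R \<subseteq> K" "K \<inter> bex ` (UNIV - R) = {}"
    and cl: "\<And>x y. x \<in> K \<Longrightarrow> {x, y} \<in> E \<Longrightarrow> y \<in> K"
  shows "mincut E w1 (bex ` R) (bex ` (UNIV - R)) = 0"
proof -
  have e: "{e\<in>E. w1 e = 0} = {}" by (simp add: w1_def)
  have "separates E {e\<in>E. w1 e = 0} (bex ` R) (bex ` (UNIV - R))"
    unfolding e by (rule sep_closed[OF K]) (use cl in \<open>auto simp: adj_def\<close>)
  then show ?thesis using mincut_facts(2)[OF g bex_disj] by blast
qed

lemma pos_by_edge: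
  assumes g: "wgraph Vs E w1" and e: "{x, y} \<in> E" "x \<in> bex ` R" "y \<in> bex ` (UNIV - R)"
  shows "mincut E w1 (bex ` R) (bex ` (UNIV - R)) > 0"
proof -
  have "\<not> separates E {e\<in>E. w1 e = 0} (bex ` R) (bex ` (UNIV - R))"
    by (rule not_sep) (use e in \<open>auto simp: w1_def\<close>)
  then have "mincut E w1 (bex ` R) (bex ` (UNIV - R)) \<noteq> 0" using mincut_facts(2)[OF g bex_disj] by blast
  moreover have "mincut E w1 (bex ` R) (bex ` (UNIV - R)) \<ge> 0" using mincut_facts(1)[OF g bex_disj] .
  ultimately show ?thesis by linarith
qed

lemma D_AA: "UNIV - {RA, RA'} = {RB, RC, RB', RC'}" by (auto simp: UNIV_region)
lemma D_BC: "UNIV - {RB, RC'} = {RA, RC, RA', RB'}" by (auto simp: UNIV_region)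
lemma D_CB: "UNIV - {RC, RB'} = {RA, RB, RA', RC'}" by (auto simp: UNIV_region)
lemma D_A: "UNIV - {RA} = {RB, RC, RA', RB', RC'}" by (auto simp: UNIV_region)
lemma D_B: "UNIV - {RB} = {RA, RC, RA', RB', RC'}" by (auto simp: UNIV_region)
lemma D_C: "UNIV - {RC} = {RA, RB, RA', RB', RC'}" by (auto simp: UNIV_region)
lemma img_AA: "bex ` {RA, RA'} = {0, 3}" "bex ` (UNIV - {RA, RA'}) = {1, 2, 4, 5}"
  by (auto simp: D_AA)
lemma img_BC: "bex ` {RB, RC'} = {1, 5}" "bex ` (UNIV - {RB, RC'}) = {0, 2, 3, 4}"
  by (auto simp: D_BC)
lemma img_CB: "bex ` {RC, RB'} = {2, 4}" "bex ` (UNIV - {RC, RB'}) = {0, 1, 3, 5}"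
  by (auto simp: D_CB)
lemma img_A: "bex ` {RA} = {0}" "3 \<in> bex ` (UNIV - {RA})" by (auto simp: D_A)
lemma img_B: "bex ` {RB} = {1}" "5 \<in> bex ` (UNIV - {RB})" by (auto simp: D_B)
lemma img_C: "bex ` {RC} = {2}" "4 \<in> bex ` (UNIV - {RC})" by (auto simp: D_C)

lemma vv_vals: "vv {RA, RA'} = 0" "vv {RB, RC'} = 0" "vv {RC, RB'} = 0"
    "vv {RA} > 0" "vv {RB} > 0"
  unfolding vv_def
  subgoal by (rule zero_by_K[OF wgraph_v, of _ "{0,3}"]) (auto simp: img_AA Ev_def doubleton_eq_iff)
  subgoal by (rule zero_by_K[OF wgraph_v, of _ "{1,5}"]) (auto simp: img_BC Ev_def doubleton_eq_iff)
  subgoal by (rule zero_by_K[OF wgraph_v, of _ "{2,4}"]) (auto simp: img_CB Ev_def doubleton_eq_iff)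
  subgoal by (rule pos_by_edge[OF wgraph_v, of 0 3]) (auto simp: img_A Ev_def)
  subgoal by (rule pos_by_edge[OF wgraph_v, of 1 5]) (auto simp: img_B Ev_def)
  done

lemma uu_vals: "uu {RA, RA'} = 0" "uu {RB, RC'} = 0" "uu {RC, RB'} = 0" "uu {RC} > 0"
  unfolding uu_def
  subgoal by (rule zero_by_K[OF wgraph_u, of _ "{0,3}"]) (auto simp: img_AA Eu_def doubleton_eq_iff)
  subgoal by (rule zero_by_K[OF wgraph_u, of _ "{1,5}"]) (auto simp: img_BC Eu_def doubleton_eq_iff)
  subgoal by (rule zero_by_K[OF wgraph_u, of _ "{2,4}"]) (auto simp: img_CB Eu_def doubleton_eq_iff)
  subgoal by (rule pos_by_edge[OF wgraph_u, of 2 4]) (auto simp: img_C Eu_def)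
  done

lemma vv_nonneg: "vv R \<ge> 0" unfolding vv_def by (rule mincut_facts(1)[OF wgraph_v bex_disj])
lemma uu_nonneg: "uu R \<ge> 0" unfolding uu_def by (rule mincut_facts(1)[OF wgraph_u bex_disj])

lemma reach_pair:
  assumes gm: "graph_model Vs E w b S" and r12: "r1 \<noteq> r2"
    and z: "S {r1, r2} = 0" and p: "S {r1} > 0"
  shows "(b r1, b r2) \<in> (adj (E - {e\<in>E. w e = 0}))\<^sup>*"
    and "\<And>r. r \<noteq> r1 \<Longrightarrow> r \<noteq> r2 \<Longrightarrow> (b r1, b r) \<notin> (adj (E - {e\<in>E. w e = 0}))\<^sup>*"
proof -
  let ?R = "(adj (E - {e\<in>E. w e = 0}))\<^sup>*"
  have sep: "separates E {e\<in>E. w e = 0} (b ` {r1, r2}) (b ` (UNIV - {r1, r2}))"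
    by (rule gm_zero[OF gm _ z]) simp
  have ns: "\<not> separates E {e\<in>E. w e = 0} (b ` {r1}) (b ` (UNIV - {r1}))"
    by (rule gm_pos[OF gm _ p]) simp
  show nr: "(b r1, b r) \<notin> ?R" if "r \<noteq> r1" "r \<noteq> r2" for r
    using sep that unfolding separates_def by auto
  obtain r where r: "r \<noteq> r1" "(b r1, b r) \<in> ?R"
    using ns unfolding separates_def by auto
  then have "r = r2" using nr by blast
  then show "(b r1, b r2) \<in> ?R" using r by simp
qed

lemma W_not_planar: "(\<lambda>R. 1/2 * vv R + (1 - 1/2) * uu R) \<notin> V_planar"
proof
  define W where "W = (\<lambda>R. 1/2 * vv R + (1 - 1/2) * uu R)"
  assume "(\<lambda>R. 1/2 * vv R + (1 - 1/2) * uu R) \<in> V_planar"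
  then have "planar_graph_model W" unfolding V_planar_def W_def by simp
  then obtain Vs E w b pos \<gamma> where gm: "graph_model Vs E w b W" and dr: "annulus_drawing Vs E b pos \<gamma>"
    unfolding planar_graph_model_def by blast
  have Wz: "W {RA, RA'} = 0" "W {RB, RC'} = 0" "W {RC, RB'} = 0"
    unfolding W_def using vv_vals uu_vals by simp_all
  have Wp: "W {RA} > 0" "W {RB} > 0" "W {RC} > 0"
    unfolding W_def
    using vv_vals(4) uu_nonneg[of "{RA}"] vv_vals(5) uu_nonneg[of "{RB}"] uu_vals(4) vv_nonneg[of "{RC}"]
    by simp_all
  define E' where "E' = E - {e\<in>E. w e = 0}"
  have E'E: "E' \<subseteq> E" unfolding E'_def by auto
  have A: "(b RA, b RA') \<in> (adj E')\<^sup>*" "(b RA, b RB) \<notin> (adj E')\<^sup>*" "(b RA, b RC) \<notin> (adj E')\<^sup>*"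
    using reach_pair[OF gm _ Wz(1) Wp(1)] unfolding E'_def by auto
  have B: "(b RB, b RC') \<in> (adj E')\<^sup>*" "(b RB, b RC) \<notin> (adj E')\<^sup>*"
    using reach_pair[OF gm _ Wz(2) Wp(2)] unfolding E'_def by auto
  have C: "(b RC, b RB') \<in> (adj E')\<^sup>*"
    using reach_pair[OF gm _ Wz(3) Wp(3)] unfolding E'_def by auto
  have wg: "wgraph Vs E w" and bV: "\<And>r. b r \<in> Vs" using gm unfolding graph_model_def by auto
  obtain g1 where g1: "path g1" "pathstart g1 = pos (b RA)" "pathfinish g1 = pos (b RA')"
      "path_image g1 \<subseteq> annulus" "path_image g1 \<subseteq> compimg E' pos \<gamma> (b RA)"
    using reach_path[OF dr E'E bV A(1)] by blast
  obtain g2 where g2: "path g2" "pathstart g2 = pos (b RB)" "pathfinish g2 = pos (b RC')"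
      "path_image g2 \<subseteq> annulus" "path_image g2 \<subseteq> compimg E' pos \<gamma> (b RB)"
    using reach_path[OF dr E'E bV B(1)] by blast
  obtain g3 where g3: "path g3" "pathstart g3 = pos (b RC)" "pathfinish g3 = pos (b RB')"
      "path_image g3 \<subseteq> annulus" "path_image g3 \<subseteq> compimg E' pos \<gamma> (b RC)"
    using reach_path[OF dr E'E bV C] by blast
  have d12: "path_image g1 \<inter> path_image g2 = {}"
    using compimg_disjoint[OF dr wg E'E bV bV A(2)] g1(5) g2(5) by blast
  have d13: "path_image g1 \<inter> path_image g3 = {}"
    using compimg_disjoint[OF dr wg E'E bV bV A(3)] g1(5) g3(5) by blast
  have d23: "path_image g2 \<inter> path_image g3 = {}"
    using compimg_disjoint[OF dr wg E'E bV bV B(2)] g2(5) g3(5) by blast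
  have n1: "norm (pos (b RA)) = 1" "norm (pos (b RB)) = 1" "norm (pos (b RC)) = 1"
    and n2: "norm (pos (b RA')) = 2" "norm (pos (b RB')) = 2" "norm (pos (b RC')) = 2"
    and cc: "ccw (pos (b RA)) (pos (b RB)) (pos (b RC))" "ccw (pos (b RA')) (pos (b RB')) (pos (b RC'))"
    using dr unfolding annulus_drawing_def by auto
  show False
    by (rule no_reversal[OF g1(1) g2(1) g3(1) g1(4) g2(4) g3(4) d12 d13 d23])
       (use g1 g2 g3 n1 n2 cc in simp_all)
qed

lemma vv_in: "vv \<in> V_planar"
proof -
  have e: "vv = (\<lambda>R. mincut Ev w1 (bex ` R) (bex ` (UNIV - R)))" by (rule ext) (simp add: vv_def)
  show ?thesis unfolding V_planar_def planar_graph_model_def e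
    using input_from_graph[OF wgraph_v] gm_from_graph[OF wgraph_v] drawing_v by blast
qed

lemma uu_in: "uu \<in> V_planar"
proof -
  have e: "uu = (\<lambda>R. mincut Eu w1 (bex ` R) (bex ` (UNIV - R)))" by (rule ext) (simp add: uu_def)
  show ?thesis unfolding V_planar_def planar_graph_model_def e
    using input_from_graph[OF wgraph_u] gm_from_graph[OF wgraph_u] drawing_u by blast
qed

theorem theorem3:
  shows "\<exists>v\<in>V_planar. \<exists>u\<in>V_planar. \<exists>t::real. 0 \<le> t \<and> t \<le> 1 \<and>
           (\<lambda>R. t * v R + (1 - t) * u R) \<notin> V_planar"
  using vv_in uu_in W_not_planar by (intro bexI[of _ vv] bexI[of _ uu] exI[of _ "1/2"]) auto

end
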